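(* Consider the following slotted system. There are $N\ge2$ users and slots $t=1,\dots,T$. In each slot the BS schedules one user by an arbitrary (possibly randomized) scheduling algorithm. An adversary uses a blocking matrix $\sigma\in\{0,1\}^{N\times T}$, where $\sigma_i(t)=0$ means user $i$ is blocked in slot $t$. Feasibility means $\sum_{i,t}(1-\sigma_i(t))\le\alpha T$ and at most one user is blocked per slot, where $0<\alpha<1$ and $\alpha T\in\mathbb Z$. Ages satisfy $a_i(1)=1$, $a_i(t+1)=1$ if user $i$ is scheduled and not blocked in slot $t$, and $a_i(t+1)=a_i(t)+1$ otherwise. The average age is $\Delta=\frac1T\sum_{t=1}^T\frac1N\sum_i\mathbb E[a_i(t)]$. Then for every scheduling algorithm there exists a feasible blocking matrix under which $\Delta\ge\frac{T\alpha^2}{2N}$. *)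

theory Defs
  imports "HOL-Probability.Probability"
begin

text \<open>Users are indexed 0..<N, slots 1..T. A blocking matrix is
  sigma :: nat => nat => nat, with sigma i t in {0,1}; sigma i t = 0 means
  user i is blocked in slot t.
  A deterministic causal scheduling policy pol maps a slot t and the
  blocking information of all past slots (columns s < t; future entries
  masked to 1) to the scheduled user.\<close>

definition sched :: "(nat \<Rightarrow> (nat \<Rightarrow> nat \<Rightarrow> nat) \<Rightarrow> nat) \<Rightarrow> (nat \<Rightarrow> nat \<Rightarrow> nat) \<Rightarrow> nat \<Rightarrow> nat" where
  "sched pol \<sigma> t = pol t (\<lambda>i s. if s < t then \<sigma> i s else 1)"

text \<open>age_aux pol sigma i n = a_i(n+1).\<close>
fun age_aux :: "(nat \<Rightarrow> (nat \<Rightarrow> nat \<Rightarrow> nat) \<Rightarrow> nat) \<Rightarrow> (nat \<Rightarrow> nat \<Rightarrow> nat) \<Rightarrow> nat \<Rightarrow> nat \<Rightarrow> nat" where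
  "age_aux pol \<sigma> i 0 = 1"
| "age_aux pol \<sigma> i (Suc n) =
     (if sched pol \<sigma> (Suc n) = i \<and> \<sigma> i (Suc n) = 1 then 1 else age_aux pol \<sigma> i n + 1)"

text \<open>age pol sigma i t = a_i(t) for t >= 1.\<close>
definition age :: "(nat \<Rightarrow> (nat \<Rightarrow> nat \<Rightarrow> nat) \<Rightarrow> nat) \<Rightarrow> (nat \<Rightarrow> nat \<Rightarrow> nat) \<Rightarrow> nat \<Rightarrow> nat \<Rightarrow> nat" where
  "age pol \<sigma> i t = age_aux pol \<sigma> i (t - 1)"

definition feasible_blocking :: "nat \<Rightarrow> nat \<Rightarrow> real \<Rightarrow> (nat \<Rightarrow> nat \<Rightarrow> nat) \<Rightarrow> bool" where
  "feasible_blocking N T \<alpha> \<sigma> \<longleftrightarrow>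
     (\<forall>i<N. \<forall>t\<in>{1..T}. \<sigma> i t \<in> {0, 1}) \<and>
     real (\<Sum>i<N. \<Sum>t=1..T. 1 - \<sigma> i t) \<le> \<alpha> * real T \<and>
     (\<forall>t\<in>{1..T}. card {i. i < N \<and> \<sigma> i t = 0} \<le> 1)"

text \<open>Average age under a randomized scheduler: pol \<omega> is the policy used
  for random outcome \<omega> of the probability space M.\<close>
definition avg_age :: "'w measure \<Rightarrow> ('w \<Rightarrow> nat \<Rightarrow> (nat \<Rightarrow> nat \<Rightarrow> nat) \<Rightarrow> nat) \<Rightarrow> nat \<Rightarrow> nat \<Rightarrow> (nat \<Rightarrow> nat \<Rightarrow> nat) \<Rightarrow> real" where
  "avg_age M pol N T \<sigma> =
     (1 / real T) * (\<Sum>t=1..T. (1 / real N) *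
        (\<Sum>i<N. integral\<^sup>L M (\<lambda>\<omega>. real (age (pol \<omega>) \<sigma> i t))))"

end

theory Submission
  imports Defs
begin

lemma age_aux_blocked:
  assumes "\<And>t. 1 \<le> t \<Longrightarrow> t \<le> K \<Longrightarrow> \<sigma> 0 t = 0"
  shows "n \<le> K \<Longrightarrow> age_aux pol \<sigma> 0 n = n + 1"
proof (induction n)
  case 0 then show ?case by simp
next
  case (Suc n)
  then show ?case using assms[of "Suc n"] by simp
qed

lemma sum_id_real: "(\<Sum>t=1..(K::nat). real t) = real K * (real K + 1) / 2"
  by (induction K) (auto simp: field_simps)

theorem lemma2:
  fixes M :: "'w measure"
    and pol :: "'w \<Rightarrow> nat \<Rightarrow> (nat \<Rightarrow> nat \<Rightarrow> nat) \<Rightarrow> nat"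
    and N T :: nat and \<alpha> :: real
  assumes "prob_space M"
    and "\<And>\<omega> t h. pol \<omega> t h < N"
    and "\<And>t h. (\<lambda>\<omega>. pol \<omega> t h) \<in> M \<rightarrow>\<^sub>M count_space UNIV"
    and "N \<ge> 2"
    and "0 < \<alpha>" and "\<alpha> < 1"
    and "\<alpha> * real T \<in> \<int>"
  shows "\<exists>\<sigma>. feasible_blocking N T \<alpha> \<sigma> \<and>
           avg_age M pol N T \<sigma> \<ge> real T * \<alpha>^2 / (2 * real N)"
proof -
  interpret P: prob_space M by fact
  obtain k where k: "\<alpha> * real T = of_int k" using assms(7) by (auto elim: Ints_cases)
  have k0: "k \<ge> 0" proof -
    have "0 \<le> \<alpha> * real T" using assms(5) by simp
    then show ?thesis using k by simp
  qed
  define K where "K = nat k"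
  have KT: "real K = \<alpha> * real T" using k k0 K_def by simp
  have KleT: "K \<le> T"
  proof -
    have "\<alpha> * real T \<le> real T" using assms(5,6) by (intro mult_left_le_one_le) auto
    then show ?thesis using KT by linarith
  qed
  define \<sigma> :: "nat \<Rightarrow> nat \<Rightarrow> nat" where
    "\<sigma> = (\<lambda>i t. if i = 0 \<and> 1 \<le> t \<and> t \<le> K then 0 else 1)"
  have ages: "age (pol \<omega>) \<sigma> 0 t = t" if "1 \<le> t" "t \<le> K" for \<omega> t
    using age_aux_blocked[of K \<sigma> "t - 1" "pol \<omega>"] that unfolding age_def \<sigma>_def by simp
  have N0: "0 < N" using assms(4) by simp
  have feas: "feasible_blocking N T \<alpha> \<sigma>"
  proof -
    have "(\<Sum>i<N. \<Sum>t=1..T. 1 - \<sigma> i t) = (\<Sum>i\<in>{0}. \<Sum>t=1..T. 1 - \<sigma> i t)"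
      by (rule sum.mono_neutral_right) (use N0 in \<open>auto simp: \<sigma>_def\<close>)
    also have "\<dots> = (\<Sum>t=1..T. 1 - \<sigma> 0 t)" by simp
    also have "\<dots> = (\<Sum>t\<in>{1..K}. 1)"
      by (rule sum.mono_neutral_cong_right) (use KleT in \<open>auto simp: \<sigma>_def\<close>)
    also have "\<dots> = K" by simp
    finally have s: "(\<Sum>i<N. \<Sum>t=1..T. 1 - \<sigma> i t) = K" .
    have c: "card {i. i < N \<and> \<sigma> i t = 0} \<le> 1" for t
    proof -
      have "{i. i < N \<and> \<sigma> i t = 0} \<subseteq> {0}" by (auto simp: \<sigma>_def split: if_splits)
      then have "card {i. i < N \<and> \<sigma> i t = 0} \<le> card {0::nat}" by (intro card_mono) auto
      then show ?thesis by simp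
    qed
    have c1: "\<forall>i<N. \<forall>t\<in>{1..T}. \<sigma> i t \<in> {0, 1}" by (simp add: \<sigma>_def)
    have c2: "real (\<Sum>i<N. \<Sum>t=1..T. 1 - \<sigma> i t) \<le> \<alpha> * real T" by (simp only: s KT)
    show ?thesis unfolding feasible_blocking_def using c1 c2 c by blast
  qed
  show ?thesis
  proof (intro exI conjI, rule feas)
    show "avg_age M pol N T \<sigma> \<ge> real T * \<alpha>^2 / (2 * real N)"
    proof (cases "T = 0")
      case True then show ?thesis by (simp add: avg_age_def)
    next
      case False
      have nn: "0 \<le> integral\<^sup>L M (\<lambda>\<omega>. real (age (pol \<omega>) \<sigma> i t))" for i t
        by (rule Bochner_Integration.integral_nonneg) simp
      have inner: "real t \<le> (\<Sum>i<N. integral\<^sup>L M (\<lambda>\<omega>. real (age (pol \<omega>) \<sigma> i t)))"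
        if "t \<in> {1..K}" for t
      proof -
        have "integral\<^sup>L M (\<lambda>\<omega>. real (age (pol \<omega>) \<sigma> 0 t)) = integral\<^sup>L M (\<lambda>\<omega>. real t)"
          using ages that by simp
        also have "\<dots> = real t" by (simp add: P.prob_space)
        finally have e: "integral\<^sup>L M (\<lambda>\<omega>. real (age (pol \<omega>) \<sigma> 0 t)) = real t" .
        have "integral\<^sup>L M (\<lambda>\<omega>. real (age (pol \<omega>) \<sigma> 0 t))
              \<le> (\<Sum>i<N. integral\<^sup>L M (\<lambda>\<omega>. real (age (pol \<omega>) \<sigma> i t)))"
          by (rule member_le_sum) (use N0 nn in auto)
        then show ?thesis using e by simp
      qed
      have "(\<Sum>t=1..K. real t / real N) \<le> (\<Sum>t=1..K. (1 / real N) *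
          (\<Sum>i<N. integral\<^sup>L M (\<lambda>\<omega>. real (age (pol \<omega>) \<sigma> i t))))"
        by (rule sum_mono) (use inner N0 in \<open>auto simp: divide_right_mono\<close>)
      also have "\<dots> \<le> (\<Sum>t=1..T. (1 / real N) *
          (\<Sum>i<N. integral\<^sup>L M (\<lambda>\<omega>. real (age (pol \<omega>) \<sigma> i t))))"
        by (rule sum_mono2) (use KleT nn in \<open>auto intro!: sum_nonneg divide_nonneg_nonneg\<close>)
      finally have A: "(\<Sum>t=1..K. real t) / real N \<le> (\<Sum>t=1..T. (1 / real N) *
          (\<Sum>i<N. integral\<^sup>L M (\<lambda>\<omega>. real (age (pol \<omega>) \<sigma> i t))))"
        by (simp add: sum_divide_distrib)
      have B: "real T * \<alpha>^2 / (2 * real N) \<le> (1 / real T) * ((\<Sum>t=1..K. real t) / real N)"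
      proof -
        have "real T * \<alpha>^2 / (2 * real N) = (1 / real T) * ((real K * real K / 2) / real N)"
          using False KT by (simp add: field_simps power2_eq_square)
        also have "\<dots> \<le> (1 / real T) * ((\<Sum>t=1..K. real t) / real N)"
          unfolding sum_id_real using N0
          by (intro mult_left_mono divide_right_mono) (auto simp: field_simps)
        finally show ?thesis .
      qed
      have C: "(1 / real T) * ((\<Sum>t=1..K. real t) / real N) \<le> (1 / real T) * (\<Sum>t=1..T. (1 / real N) *
          (\<Sum>i<N. integral\<^sup>L M (\<lambda>\<omega>. real (age (pol \<omega>) \<sigma> i t))))"
        by (rule mult_left_mono[OF A]) simp
      show ?thesis unfolding avg_age_def using order_trans[OF B C] .
    qed
  qed
qed

end
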